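(* Let $m,n,d,e$ be positive integers with $m=2n$ and $e=\gcd(n,d)=\gcd(m,d)$, and let $s\ge u\ge2$ be integers. Then \[|V_{s,u,\{0\}}|=2^{eu(u+1)/2}\prod_{i=0}^{u-1}(2^m-2^{ei}).\]
   Context: For integers $s\ge0$ and $u\ge1$, $V_{s,u}$ denotes the set of solutions $(x_1,\dots,x_{2u})\in\mathbb{F}_{2^m}^{2u}$ of the system \[\sum_{i=1}^u\big(x_{2i-1}x_{2i}^{2^{(\frac{n}{e}-j)d}}+x_{2i-1}^{2^{(\frac{n}{e}-j)d}}x_{2i}\big)=0,\qquad j=0,1,\dots,s.\] $V_{s,u,\{0\}}$ is the set of $(x_1,\dots,x_{2u})\in V_{s,u}$ such that $x_2,x_4,\dots,x_{2u}$ are linearly independent over $\mathbb{F}_{2^e}$. Equivalently, $\{(c_1,\dots,c_u)\in\mathbb{F}_{2^e}^u\mid\sum_i c_ix_{2i}=0\}=\{0\}$. *)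

theory Defs
  imports Main
begin

text \<open>The field F_{2^m} is modelled by a finite field type 'a with CARD('a) = 2^m.
  The map x \<mapsto> x^(2^k) for an integer k (possibly negative) is the k-th power of the
  Frobenius; since x^(2^m) = x it depends only on k mod m.\<close>

definition frob :: "nat \<Rightarrow> int \<Rightarrow> 'a::field \<Rightarrow> 'a" where
  "frob m k x = x ^ (2 ^ nat (k mod int m))"

text \<open>Tuples (x_1,...,x_{2u}) are lists xs of length 2u with x_k = xs ! (k-1).\<close>

definition V :: "nat \<Rightarrow> nat \<Rightarrow> nat \<Rightarrow> nat \<Rightarrow> nat \<Rightarrow> nat \<Rightarrow> ('a::{field,finite}) list set" where
  "V m n d e s u = {xs. length xs = 2*u \<and>
     (\<forall>j\<in>{0..s}. (\<Sum>i=1..u.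
        xs!(2*i-2) * frob m ((int (n div e) - int j) * int d) (xs!(2*i-1))
        + frob m ((int (n div e) - int j) * int d) (xs!(2*i-2)) * xs!(2*i-1)) = 0)}"

definition subF :: "nat \<Rightarrow> ('a::field) set" where
  "subF e = {c. c ^ (2 ^ e) = c}"

definition V0 :: "nat \<Rightarrow> nat \<Rightarrow> nat \<Rightarrow> nat \<Rightarrow> nat \<Rightarrow> nat \<Rightarrow> ('a::{field,finite}) list set" where
  "V0 m n d e s u = {xs \<in> V m n d e s u.
     {c :: nat \<Rightarrow> 'a. (\<forall>i. c i \<in> subF e) \<and> (\<forall>i. i \<notin> {1..u} \<longrightarrow> c i = 0) \<and>
        (\<Sum>i=1..u. c i * xs!(2*i-1)) = 0} = {\<lambda>_. 0}}"

end

theory Submission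
  imports Defs "HOL-Computational_Algebra.Polynomial" "HOL-Library.FuncSet"
begin


lemma kernel_fiber:
  fixes f :: "'a::ab_group_add \<Rightarrow> 'b::ab_group_add"
  assumes add: "\<And>a b. f (a + b) = f a + f b" and x0: "f x0 = b"
  shows "{x. f x = b} = (\<lambda>k. x0 + k) ` {k. f k = 0}"
proof -
  have f0: "f 0 = 0" using add[of 0 0] by simp
  have fm: "f (a - c) = f a - f c" for a c
    using add[of "a - c" c] by (simp add: algebra_simps)
  show ?thesis
  proof (intro set_eqI iffI)
    fix x assume "x \<in> {x. f x = b}"
    hence "f (x - x0) = 0" using fm x0 by simp
    thus "x \<in> (\<lambda>k. x0 + k) ` {k. f k = 0}" by (intro image_eqI[of _ _ "x - x0"]) auto
  next
    fix x assume "x \<in> (\<lambda>k. x0 + k) ` {k. f k = 0}"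
    then obtain k where "f k = 0" "x = x0 + k" by auto
    thus "x \<in> {x. f x = b}" using add x0 by simp
  qed
qed

lemma kernel_fiber_card:
  fixes f :: "'a::{ab_group_add,finite} \<Rightarrow> 'b::ab_group_add"
  assumes add: "\<And>a b. f (a + b) = f a + f b"
  shows "card {x. f x = b} \<le> card {x. f x = 0}"
proof (cases "\<exists>x0. f x0 = b")
  case True
  then obtain x0 where x0: "f x0 = b" by auto
  show ?thesis unfolding kernel_fiber[OF add x0] by (rule card_image_le) simp
next
  case False
  hence "{x. f x = b} = {}" by auto
  thus ?thesis by simp
qed

lemma kernel_image_card:
  fixes f :: "'a::{ab_group_add,finite} \<Rightarrow> 'b::ab_group_add"
  assumes add: "\<And>a b. f (a + b) = f a + f b"
  shows "card (UNIV::'a set) = card {x. f x = 0} * card (range f)"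
proof -
  have eq: "card {x. f x = b} = card {x. f x = 0}" if "b \<in> range f" for b
  proof -
    from that obtain x0 where "b = f x0" by blast
    hence x0: "f x0 = b" by simp
    show ?thesis unfolding kernel_fiber[OF add x0]
      by (rule card_image) (simp add: inj_on_def)
  qed
  have "UNIV = (\<Union>b\<in>range f. {x. f x = b})" by auto
  hence "card (UNIV::'a set) = card (\<Union>b\<in>range f. {x. f x = b})" by simp
  also have "\<dots> = (\<Sum>b\<in>range f. card {x. f x = b})"
    by (rule card_UN_disjoint) auto
  also have "\<dots> = (\<Sum>b\<in>range f. card {x. f x = 0})" using eq by simp
  finally show ?thesis by simp
qed

lemma preimage_card:
  fixes f :: "'a::{ab_group_add,finite} \<Rightarrow> 'b::ab_group_add"
  assumes add: "\<And>a b. f (a + b) = f a + f b" and fin: "finite A"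
  shows "card {x. f x \<in> A} \<le> card {x. f x = 0} * card A"
proof -
  have "{x. f x \<in> A} = (\<Union>b\<in>A. {x. f x = b})" by auto
  hence "card {x. f x \<in> A} = card (\<Union>b\<in>A. {x. f x = b})" by simp
  also have "\<dots> = (\<Sum>b\<in>A. card {x. f x = b})"
    by (rule card_UN_disjoint) (auto simp: fin)
  also have "\<dots> \<le> (\<Sum>b\<in>A. card {x. f x = 0})"
    by (rule sum_mono) (rule kernel_fiber_card[OF add])
  finally show ?thesis by (simp add: mult.commute)
qed

definition sg :: "nat \<Rightarrow> nat \<Rightarrow> nat \<Rightarrow> 'a::field \<Rightarrow> 'a" where
  "sg m d k x = x ^ (2 ^ (k * d mod m))"

definition Tr :: "nat \<Rightarrow> nat \<Rightarrow> nat \<Rightarrow> 'a::field \<Rightarrow> 'a" where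
  "Tr m d M t = (\<Sum>k<M. sg m d k t)"

locale fset =
  fixes m d e M :: nat
  assumes cardK: "card (UNIV::'a::{field,finite} set) = 2 ^ m" and m0: "m > 0"
    and d0: "d > 0" and e0: "e > 0" and mM: "m = e * M" and ed: "e dvd d"
    and gmd: "gcd d m = e"
begin

lemma pow_card: "(x::'a) ^ (2 ^ m) = x"
proof (cases "x = 0")
  case True thus ?thesis by simp
next
  case False
  let ?A = "UNIV - {0::'a}"
  have bij: "(\<lambda>y. x * y) ` ?A = ?A"
  proof (intro set_eqI iffI)
    fix z assume "z \<in> ?A"
    thus "z \<in> (\<lambda>y. x * y) ` ?A" using False
      by (intro image_eqI[of _ _ "z / x"]) auto
  qed (use False in auto)
  have inj: "inj_on (\<lambda>y. x * y) ?A" using False by (auto simp: inj_on_def)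
  have "prod id ?A = prod id ((\<lambda>y. x * y) ` ?A)" using bij by simp
  also have "\<dots> = prod (\<lambda>y. x * y) ?A" using prod.reindex[OF inj] by simp
  also have "\<dots> = x ^ card ?A * prod id ?A" by (simp add: prod.distrib)
  finally have "x ^ card ?A * prod id ?A = 1 * prod id ?A" by simp
  moreover have "prod id ?A \<noteq> 0" by (simp add: prod_zero_iff)
  ultimately have x1: "x ^ card ?A = 1" by simp
  have "card ?A = 2 ^ m - 1" using cardK by (simp add: card_Diff_singleton)
  hence "(2::nat) ^ m = Suc (card ?A)" by simp
  hence "x ^ (2 ^ m) = x * x ^ card ?A" by (simp only: power_Suc)
  thus ?thesis using x1 by simp
qed

lemma char2: "(1::'a) + 1 = 0"
proof -
  have "even ((2::nat) ^ m)" using m0 by simp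
  hence "(-1::'a) ^ (2 ^ m) = 1" by simp
  hence "(-1::'a) = 1" using pow_card[of "-1"] by simp
  thus ?thesis by (metis add.right_inverse)
qed

lemma add_self: "(a::'a) + a = 0"
  using char2 by (metis mult_1 distrib_right mult_zero_left)

lemma neg_self: "- (a::'a) = a"
  using add_self by (metis add.inverse_unique)

lemma minus_is_plus: "(a::'a) - b = a + b"
  by (metis diff_conv_add_uminus neg_self)

lemma pow2_add: "((a::'a) + b) ^ (2 ^ k) = a ^ (2 ^ k) + b ^ (2 ^ k)"
proof (induction k)
  case 0 thus ?case by simp
next
  case (Suc k)
  have sq: "((c::'a) + e) ^ 2 = c ^ 2 + e ^ 2" for c e
  proof -
    have "(c + e) ^ 2 = c^2 + e^2 + (c*e + c*e)" by (simp add: power2_eq_square algebra_simps)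
    thus ?thesis by (simp add: add_self)
  qed
  have "(a + b) ^ (2 ^ Suc k) = ((a + b) ^ (2 ^ k)) ^ 2" by (simp add: power_mult[symmetric] mult.commute)
  also have "\<dots> = (a ^ (2^k)) ^ 2 + (b ^ (2^k)) ^ 2" using Suc sq by simp
  also have "\<dots> = a ^ (2 ^ Suc k) + b ^ (2 ^ Suc k)" by (simp add: power_mult[symmetric] mult.commute)
  finally show ?case .
qed

lemma pow2_sum: "(\<Sum>i\<in>I. (g i::'a)) ^ (2 ^ k) = (\<Sum>i\<in>I. g i ^ (2 ^ k))"
proof (induction I rule: infinite_finite_induct)
  case (insert x F) thus ?case by (simp add: pow2_add)
qed simp_all

lemma pow2_inj: "(a::'a) ^ (2 ^ k) = b ^ (2 ^ k) \<Longrightarrow> a = b"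
proof -
  assume "a ^ (2 ^ k) = b ^ (2 ^ k)"
  hence "(a + b) ^ (2 ^ k) = 0" using pow2_add add_self by simp
  hence "a + b = 0" by simp
  thus "a = b" by (metis add_self add_left_cancel)
qed

lemma pow2_pow2: "((a::'a) ^ (2 ^ k)) ^ (2 ^ l) = a ^ (2 ^ (k + l))"
  by (simp add: power_mult[symmetric] power_add)

lemma pow2_mod: "(a::'a) ^ (2 ^ k) = a ^ (2 ^ (k mod m))"
proof (induction k rule: less_induct)
  case (less k)
  show ?case
  proof (cases "k < m")
    case True thus ?thesis by simp
  next
    case False
    hence k: "k = m + (k - m)" by simp
    have "a ^ (2 ^ k) = (a ^ (2 ^ m)) ^ (2 ^ (k - m))" by (subst k, subst pow2_pow2) simp
    also have "\<dots> = a ^ (2 ^ (k - m))" by (simp add: pow_card)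
    also have "\<dots> = a ^ (2 ^ ((k - m) mod m))" using less m0 False by simp
    also have "(k - m) mod m = k mod m" using False by (simp add: mod_if)
    finally show ?thesis .
  qed
qed

lemma fixed_mult: "(a::'a) ^ (2 ^ k) = a \<Longrightarrow> a ^ (2 ^ (k * t)) = a"
proof (induction t)
  case (Suc t)
  have "a ^ (2 ^ (k * Suc t)) = (a ^ (2 ^ (k * t))) ^ (2 ^ k)"
    by (simp add: pow2_pow2 add.commute)
  thus ?case using Suc by simp
qed simp

lemma fixed_gcd:
  assumes "(a::'a) ^ (2 ^ p) = a" "a ^ (2 ^ r) = a" "p \<noteq> 0"
  shows "a ^ (2 ^ gcd p r) = a"
proof -
  obtain i j where ij: "p * i = r * j + gcd p r" using bezout_nat[OF assms(3)] by blast
  have "(a ^ (2 ^ gcd p r)) ^ (2 ^ (r * j)) = a ^ (2 ^ (p * i))"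
    by (simp add: pow2_pow2 ij add.commute)
  also have "\<dots> = a" using fixed_mult assms by simp
  also have "\<dots> = a ^ (2 ^ (r * j))" using fixed_mult assms by simp
  finally show ?thesis by (rule pow2_inj)
qed


abbreviation S where "S \<equiv> (sg m d :: nat \<Rightarrow> 'a \<Rightarrow> 'a)"
abbreviation FF where "FF \<equiv> (subF e :: 'a set)"
abbreviation T where "T \<equiv> (Tr m d M :: 'a \<Rightarrow> 'a)"

lemma M0: "M > 0" using m0 mM by (cases M) auto

lemma mdvd: "m dvd M * d" using mM ed by (auto simp: mult.commute)

lemma sg_0[simp]: "S 0 x = x" by (simp add: sg_def)

lemma sg_comp: "S a (S b x) = S (a + b) x"
proof -
  have "S a (S b x) = x ^ (2 ^ (b * d mod m + a * d mod m))"
    by (simp add: sg_def pow2_pow2)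
  also have "\<dots> = x ^ (2 ^ ((b * d mod m + a * d mod m) mod m))" by (rule pow2_mod)
  also have "(b * d mod m + a * d mod m) mod m = (a + b) * d mod m"
    by (simp add: mod_add_eq algebra_simps)
  finally show ?thesis by (simp add: sg_def)
qed

lemma sg_mod: "S k x = S (k mod M) x"
proof -
  obtain c where c: "M * d = m * c" using mdvd by blast
  have "k * d = (k mod M) * d + m * (c * (k div M))"
    using c by (metis (no_types, lifting) add.commute div_mult_mod_eq mult.assoc mult.commute
        distrib_right)
  hence "k * d mod m = (k mod M) * d mod m" by simp
  thus ?thesis by (simp add: sg_def)
qed

lemma sg_M: "S M x = x" using sg_mod[of M] by simp

lemma sg_add: "S k (a + b) = S k a + S k b" by (simp add: sg_def pow2_add)
lemma sg_mult: "S k (a * b) = S k a * S k b" by (simp add: sg_def power_mult_distrib)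
lemma sg_zero[simp]: "S k 0 = 0" by (simp add: sg_def)
lemma sg_one[simp]: "S k 1 = 1" by (simp add: sg_def)
lemma sg_sum: "S k (\<Sum>i\<in>I. g i) = (\<Sum>i\<in>I. S k (g i))" by (simp add: sg_def pow2_sum)
lemma sg_eq0[simp]: "S k x = 0 \<longleftrightarrow> x = 0" by (simp add: sg_def)
lemma sg_inj: "S k x = S k y \<Longrightarrow> x = y" unfolding sg_def by (rule pow2_inj)

lemma inF: "c \<in> FF \<longleftrightarrow> c ^ (2 ^ e) = c" by (simp add: subF_def)

lemma sg_F: "c \<in> FF \<Longrightarrow> S k c = c"
proof -
  assume c: "c \<in> FF"
  have "e dvd k * d mod m" using ed mM by (simp add: dvd_mod)
  then obtain t where "k * d mod m = e * t" by blast
  thus ?thesis using c fixed_mult[of c e t] by (simp add: sg_def inF)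
qed

lemma sg1_F: "S 1 x = x \<Longrightarrow> x \<in> FF"
proof -
  assume "S 1 x = x"
  hence "x ^ (2 ^ (d mod m)) = x" by (simp add: sg_def)
  hence "x ^ (2 ^ d) = x" using pow2_mod[of x d] by simp
  hence "x ^ (2 ^ gcd d m) = x" using fixed_gcd[of x d m] pow_card d0 by simp
  thus ?thesis using gmd by (simp add: inF)
qed

lemma F_0[simp]: "0 \<in> FF" using e0 by (simp add: inF)
lemma F_1[simp]: "1 \<in> FF" by (simp add: inF)
lemma F_add: "a \<in> FF \<Longrightarrow> b \<in> FF \<Longrightarrow> a + b \<in> FF" by (simp add: inF pow2_add)
lemma F_mult: "a \<in> FF \<Longrightarrow> b \<in> FF \<Longrightarrow> a * b \<in> FF" by (simp add: inF power_mult_distrib)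
lemma F_inv: "a \<in> FF \<Longrightarrow> inverse a \<in> FF" by (simp add: inF power_inverse)
lemma F_neg: "a \<in> FF \<Longrightarrow> - a \<in> FF" by (simp add: neg_self)
lemma F_diff: "a \<in> FF \<Longrightarrow> b \<in> FF \<Longrightarrow> a - b \<in> FF" by (simp add: minus_is_plus F_add)
lemma F_div: "a \<in> FF \<Longrightarrow> b \<in> FF \<Longrightarrow> a / b \<in> FF" by (simp add: divide_inverse F_mult F_inv)
lemma F_sum: "(\<And>i. i \<in> I \<Longrightarrow> g i \<in> FF) \<Longrightarrow> (\<Sum>i\<in>I. g i) \<in> FF"
  by (induction I rule: infinite_finite_induct) (auto simp: F_add)

lemma card_F_le: "card FF \<le> 2 ^ e"
proof -
  define p :: "'a poly" where "p = monom 1 (2 ^ e) + [:0, -1:]"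
  have e1: "(2::nat) ^ e > 1" using power_strict_increasing[of 0 e "2::nat"] e0 by simp
  have dp: "degree p = 2 ^ e" unfolding p_def using e1
    by (subst degree_add_eq_left) (auto simp: degree_monom_eq)
  hence "p \<noteq> 0" using e1 by auto
  moreover have "FF = {x. poly p x = 0}" by (auto simp: p_def inF poly_monom)
  ultimately show ?thesis using card_poly_roots_bound[of p] dp by simp
qed

lemma T_F: "T t \<in> FF"
proof -
  have "S 1 (T t) = (\<Sum>k<M. S (Suc k) t)" by (simp add: Tr_def sg_sum sg_comp)
  also have "\<dots> = (\<Sum>k<Suc M. S k t) - S 0 t"
    using sum.lessThan_Suc_shift[of "\<lambda>k. S k t" M] by simp
  also have "\<dots> = T t" by (simp add: Tr_def sg_M)
  finally show ?thesis by (rule sg1_F)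
qed

lemma T_add: "T (a + b) = T a + T b" by (simp add: Tr_def sg_add sum.distrib)
lemma T_scal: "c \<in> FF \<Longrightarrow> T (c * a) = c * T a" by (simp add: Tr_def sg_mult sg_F sum_distrib_left)
lemma T_zero[simp]: "T 0 = 0" by (simp add: Tr_def)
lemma T_sum: "T (\<Sum>i\<in>I. g i) = (\<Sum>i\<in>I. T (g i))"
  by (induction I rule: infinite_finite_induct) (simp_all add: T_add)

end



lemma empty_ivl[simp]: "{(L::nat)<..<Suc L} = {}" by auto

context fset begin

lemma sg_diff: "S k (a - b) = S k a - S k b" by (simp add: minus_is_plus sg_add)

lemma telesc:
  "(\<Sum>l<L. c l * S l s) = (\<Sum>l<L. c l) * s + (\<Sum>i<L. (\<Sum>l\<in>{i<..<L}. c l) * S i (S 1 s - s))"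
proof (induction L)
  case 0 thus ?case by simp
next
  case (Suc L)
  let ?X = "\<lambda>i. S i (S 1 s - s)"
  have q: "(\<Sum>l\<in>{i<..<Suc L}. c l) = (\<Sum>l\<in>{i<..<L}. c l) + c L" if "i < L" for i
  proof -
    have "{i<..<Suc L} = insert L {i<..<L}" using that by auto
    thus ?thesis by (simp add: add.commute)
  qed
  have emp: "{L<..<Suc L} = {}" by auto
  have "(\<Sum>i<Suc L. (\<Sum>l\<in>{i<..<Suc L}. c l) * ?X i)
      = (\<Sum>i<L. (\<Sum>l\<in>{i<..<Suc L}. c l) * ?X i)" by (simp add: emp)
  also have "\<dots> = (\<Sum>i<L. (\<Sum>l\<in>{i<..<L}. c l) * ?X i) + c L * (\<Sum>i<L. ?X i)"
    by (simp add: q distrib_right sum.distrib sum_distrib_left)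
  finally have A: "(\<Sum>i<Suc L. (\<Sum>l\<in>{i<..<Suc L}. c l) * ?X i)
      = (\<Sum>i<L. (\<Sum>l\<in>{i<..<L}. c l) * ?X i) + c L * (\<Sum>i<L. ?X i)" .
  have "(\<Sum>i<L. ?X i) = (\<Sum>i<L. S (Suc i) s - S i s)"
    by (simp add: sg_diff sg_comp)
  also have "\<dots> = S L s - s" using sum_lessThan_telescope[of "\<lambda>i. S i s" L] by simp
  finally have B: "(\<Sum>i<L. ?X i) = S L s - s" .
  have "(\<Sum>l<Suc L. c l * S l s) = (\<Sum>l<L. c l) * s + (\<Sum>i<L. (\<Sum>l\<in>{i<..<L}. c l) * ?X i)
      + c L * S L s" using Suc.IH by simp
  also have "\<dots> = (\<Sum>l<L. c l) * s + c L * s + ((\<Sum>i<L. (\<Sum>l\<in>{i<..<L}. c l) * ?X i)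
      + c L * (S L s - s))" by (simp add: algebra_simps)
  also have "\<dots> = (\<Sum>l<Suc L. c l) * s + (\<Sum>i<Suc L. (\<Sum>l\<in>{i<..<Suc L}. c l) * ?X i)"
    unfolding A B by (simp add: distrib_right)
  finally show ?case .
qed

lemma finF: "finite FF" by simp

lemma ker_bound:
  "L \<ge> 1 \<Longrightarrow> (\<exists>l<L. \<gamma> l \<noteq> 0) \<Longrightarrow>
     card {t::'a. (\<Sum>l<L. \<gamma> l * S l t) = 0} \<le> card FF ^ (L - 1)"
proof (induction L arbitrary: \<gamma>)
  case 0 thus ?case by simp
next
  case (Suc L)
  have "FF \<noteq> {}" using F_0 by blast
  hence cF1: "card FF \<ge> 1" using finF by (simp add: Suc_le_eq card_gt_0_iff)
  let ?P = "\<lambda>t. (\<Sum>l<Suc L. \<gamma> l * S l t)"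
  show ?case
  proof (cases "\<exists>v. v \<noteq> 0 \<and> ?P v = 0")
    case False
    hence "{t. ?P t = 0} \<subseteq> {0}" by auto
    hence "card {t. ?P t = 0} \<le> card {0::'a}" by (intro card_mono) simp_all
    hence "card {t. ?P t = 0} \<le> 1" by simp
    also have "1 \<le> card FF ^ (Suc L - 1)" using cF1 by simp
    finally show ?thesis .
  next
    case True
    then obtain v where v0: "v \<noteq> 0" and Pv: "?P v = 0" by auto
    show ?thesis
    proof (cases "L = 0")
      case True
      with Suc.prems have "\<gamma> 0 \<noteq> 0" by auto
      with Pv v0 True show ?thesis by simp
    next
      case False
      define c where "c l = \<gamma> l * S l v" for l
      define q where "q i = (\<Sum>l\<in>{i<..<Suc L}. c l)" for i
      define Q where "Q w = (\<Sum>i<L. q i * S i w)" for w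
      have sc: "(\<Sum>l<Suc L. c l) = 0" using Pv by (simp add: c_def)
      have PQ: "?P (v * s) = Q (S 1 s - s)" for s
      proof -
        have "?P (v * s) = (\<Sum>l<Suc L. c l * S l s)" by (simp add: c_def sg_mult mult.assoc)
        also have "\<dots> = (\<Sum>i<Suc L. q i * S i (S 1 s - s))" by (subst telesc, subst sc) (simp add: q_def)
        also have "\<dots> = Q (S 1 s - s)"
        proof -
          have "{L<..<Suc L} = {}" by auto
          thus ?thesis by (simp add: Q_def q_def)
        qed
        finally show ?thesis .
      qed
      have qnz: "\<exists>i<L. q i \<noteq> 0"
      proof (rule ccontr)
        assume "\<not> (\<exists>i<L. q i \<noteq> 0)"
        hence qz: "q i = 0" if "i < Suc L" for i using that
          by (cases "i = L") (auto simp: q_def)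
        have cz: "c l = 0" if "l < Suc L" "l \<ge> 1" for l
        proof -
          have "{l - 1<..<Suc L} = insert l {l<..<Suc L}" using that by auto
          hence "q (l - 1) = c l + q l" by (simp add: q_def)
          thus ?thesis using qz that by simp
        qed
        have "(\<Sum>l<Suc L. c l) = c 0 + (\<Sum>l<L. c (Suc l))" by (rule sum.lessThan_Suc_shift)
        also have "(\<Sum>l<L. c (Suc l)) = 0" using cz by simp
        finally have "c 0 = 0" using sc by simp
        hence "c l = 0" if "l < Suc L" for l using cz that by (cases "l = 0") auto
        hence "\<gamma> l = 0" if "l < Suc L" for l using that v0 by (simp add: c_def)
        thus False using Suc.prems by auto
      qed
      have IH: "card {w. Q w = 0} \<le> card FF ^ (L - 1)"
        unfolding Q_def using Suc.IH[of q] qnz False by simp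
      let ?D = "\<lambda>s::'a. S 1 s - s"
      have Dadd: "?D (a + b) = ?D a + ?D b" for a b by (simp add: sg_add)
      have sub: "{t. ?P t = 0} \<subseteq> (\<lambda>s. v * s) ` {s. ?D s \<in> {w. Q w = 0}}"
      proof
        fix t assume "t \<in> {t. ?P t = 0}"
        hence h: "?P (v * (t / v)) = 0" using v0 by simp
        have "Q (?D (t / v)) = 0" using h by (simp only: PQ)
        thus "t \<in> (\<lambda>s. v * s) ` {s. ?D s \<in> {w. Q w = 0}}"
          using v0 by (intro image_eqI[of _ _ "t / v"]) auto
      qed
      have "card {t. ?P t = 0} \<le> card ((\<lambda>s. v * s) ` {s. ?D s \<in> {w. Q w = 0}})"
        by (rule card_mono[OF _ sub]) simp
      also have "\<dots> \<le> card {s. ?D s \<in> {w. Q w = 0}}" by (rule card_image_le) simp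
      also have "\<dots> \<le> card {s. ?D s = 0} * card {w. Q w = 0}"
        by (rule preimage_card[OF Dadd]) simp
      also have "card {s. ?D s = 0} \<le> card FF"
        by (rule card_mono) (auto intro: sg1_F)
      also have "card FF * card {w. Q w = 0} \<le> card FF * card FF ^ (L - 1)"
        using IH by simp
      also have "\<dots> = card FF ^ (Suc L - 1)" using False by (cases L) auto
      finally show ?thesis by simp
    qed
  qed
qed

lemma cardF: "card FF = 2 ^ e" and cardK': "card (UNIV :: 'a set) = card FF ^ M"
proof -
  have Tadd: "T (a + b) = T a + T b" for a b by (rule T_add)
  have "card {t::'a. T t = 0} \<le> card FF ^ (M - 1)"
    using ker_bound[of M "\<lambda>_. 1"] M0 by (auto simp: Tr_def)
  moreover have "card (range T) \<le> card FF" by (rule card_mono) (auto simp: T_F)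
  ultimately have "card (UNIV :: 'a set) \<le> card FF ^ (M - 1) * card FF"
    using kernel_image_card[OF Tadd] by (metis mult_le_mono)
  also have "\<dots> = card FF ^ M" using M0 by (cases M) auto
  finally have le: "card (UNIV :: 'a set) \<le> card FF ^ M" .
  have le2: "card FF ^ M \<le> (2 ^ e) ^ M" using card_F_le by (simp add: power_mono)
  have eqK: "card (UNIV :: 'a set) = (2 ^ e) ^ M" using cardK mM by (simp add: power_mult)
  have "(2 ^ e) ^ Suc (M - 1) \<le> card FF ^ Suc (M - 1)" using le eqK M0 by simp
  hence "2 ^ e \<le> card FF" by (rule power_le_imp_le_base) simp
  thus "card FF = 2 ^ e" using card_F_le by simp
  thus "card (UNIV :: 'a set) = card FF ^ M" using eqK by simp
qed

lemma T_nonzero: "\<exists>r. T r \<noteq> 0"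
proof (rule ccontr)
  assume "\<not> (\<exists>r. T r \<noteq> 0)"
  hence "{t. T t = 0} = UNIV" by auto
  moreover have "card {t::'a. T t = 0} \<le> card FF ^ (M - 1)"
    using ker_bound[of M "\<lambda>_. 1"] M0 by (auto simp: Tr_def)
  ultimately have "card FF ^ M \<le> card FF ^ (M - 1)" using cardK' by simp
  moreover have "card FF > 1" using cardF e0 power_strict_increasing[of 0 e "2::nat"] by simp
  ultimately have "M \<le> M - 1" using power_le_imp_le_exp by blast
  thus False using M0 by simp
qed

end



definition beta :: "nat \<Rightarrow> nat \<Rightarrow> nat \<Rightarrow> (nat \<Rightarrow> 'a::field) \<Rightarrow> (nat \<Rightarrow> 'a) \<Rightarrow> nat \<Rightarrow> 'a" where
  "beta m d u x y k = (\<Sum>i<u. x i * sg m d k (y i) + sg m d k (x i) * y i)"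

definition indep :: "nat \<Rightarrow> nat \<Rightarrow> (nat \<Rightarrow> 'a::field) \<Rightarrow> bool" where
  "indep e u y = (\<forall>c. (\<forall>i<u. c i \<in> subF e) \<longrightarrow> (\<Sum>i<u. c i * y i) = 0 \<longrightarrow> (\<forall>i<u. c i = 0))"

context fset begin

abbreviation B where "B \<equiv> (beta m d :: nat \<Rightarrow> (nat \<Rightarrow> 'a) \<Rightarrow> _)"

definition PP :: "nat \<Rightarrow> (nat \<Rightarrow> 'a) \<Rightarrow> (nat \<Rightarrow> 'a) \<Rightarrow> 'a \<Rightarrow> 'a" where
  "PP u x y t = (\<Sum>i<u. x i * T (y i * t) + y i * T (x i * t))"

lemma PP_expand: "PP u x y t = (\<Sum>k<M. B u x y k * S k t)"
proof -
  have "PP u x y t = (\<Sum>i<u. \<Sum>k<M. (x i * S k (y i) + S k (x i) * y i) * S k t)"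
    unfolding PP_def Tr_def
    by (simp add: sg_mult sum_distrib_left sum.distrib[symmetric] algebra_simps)
  also have "\<dots> = (\<Sum>k<M. \<Sum>i<u. (x i * S k (y i) + S k (x i) * y i) * S k t)"
    by (rule sum.swap)
  also have "\<dots> = (\<Sum>k<M. B u x y k * S k t)"
    by (simp add: beta_def sum_distrib_right)
  finally show ?thesis .
qed

lemma B_sym: "k \<le> M \<Longrightarrow> B u x y (M - k) = S (M - k) (B u x y k)"
proof -
  assume k: "k \<le> M"
  have SS: "S (M - k) (S k z) = z" for z using k sg_comp[of "M - k" k z] sg_M by simp
  show ?thesis unfolding beta_def
    by (simp add: sg_sum sg_add sg_mult SS algebra_simps)
qed

lemma B_zero_sym: "k \<le> M \<Longrightarrow> B u x y k = 0 \<Longrightarrow> B u x y (M - k) = 0"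
  using B_sym by simp

lemma FF_gt1: "card FF > 1" using cardF e0 power_strict_increasing[of 0 e "2::nat"] by simp

lemma card_span2:
  "card ((\<lambda>(a, b). \<Sum>i<u. a i * x i + b i * y i) `
     ((\<Pi>\<^sub>E i\<in>{..<u}. FF) \<times> (\<Pi>\<^sub>E i\<in>{..<u}. FF))) \<le> card FF ^ (2 * u)"
proof -
  have "card ((\<lambda>(a, b). \<Sum>i<u. a i * x i + b i * y i) `
     ((\<Pi>\<^sub>E i\<in>{..<u}. FF) \<times> (\<Pi>\<^sub>E i\<in>{..<u}. FF)))
     \<le> card ((\<Pi>\<^sub>E i\<in>{..<u}. FF) \<times> (\<Pi>\<^sub>E i\<in>{..<u}. FF))"
    by (rule card_image_le) (intro finite_cartesian_product finite_PiE; simp)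
  also have "\<dots> = card FF ^ u * card FF ^ u" by (simp add: card_cartesian_product card_PiE)
  finally show ?thesis by (simp add: power_add[symmetric] mult_2)
qed

lemma PP_range: "range (PP u x y) \<subseteq> (\<lambda>(a, b). \<Sum>i<u. a i * x i + b i * y i) `
     ((\<Pi>\<^sub>E i\<in>{..<u}. FF) \<times> (\<Pi>\<^sub>E i\<in>{..<u}. FF))"
proof
  fix z assume "z \<in> range (PP u x y)"
  then obtain t where z: "z = PP u x y t" by auto
  let ?a = "restrict (\<lambda>i. T (y i * t)) {..<u}"
  let ?b = "restrict (\<lambda>i. T (x i * t)) {..<u}"
  have "z = (\<Sum>i<u. ?a i * x i + ?b i * y i)" unfolding z PP_def
    by (intro sum.cong) (auto simp: mult.commute)
  moreover have "(?a, ?b) \<in> (\<Pi>\<^sub>E i\<in>{..<u}. FF) \<times> (\<Pi>\<^sub>E i\<in>{..<u}. FF)" by (auto simp: T_F)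
  ultimately show "z \<in> (\<lambda>(a, b). \<Sum>i<u. a i * x i + b i * y i) `
     ((\<Pi>\<^sub>E i\<in>{..<u}. FF) \<times> (\<Pi>\<^sub>E i\<in>{..<u}. FF))"
    by (intro rev_image_eqI[of "(?a, ?b)"]) simp_all
qed

lemma card_range_PP: "card (range (PP u x y)) \<le> card FF ^ (2 * u)"
  by (rule order.trans[OF card_mono[OF _ PP_range] card_span2]) simp

lemma PP_add: "PP u x y (a + b) = PP u x y a + PP u x y b"
  by (simp add: PP_def distrib_left T_add sum.distrib algebra_simps)

lemma mod_2M: "(x::nat) < 2 * K \<Longrightarrow> x mod K = (if x < K then x else x - K)"
proof (cases "x < K")
  case False
  assume x: "x < 2 * K"
  have "x mod K = (x - K) mod K" using False by (simp add: le_mod_geq)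
  also have "\<dots> = x - K" using x False by simp
  finally show ?thesis using False by simp
qed simp

lemma sum_cyclic:
  assumes "k0 < M"
  shows "(\<Sum>k<M. g k) = (\<Sum>l<M. g ((a + l) mod M))"
proof -
  have bij: "bij_betw (\<lambda>l. (a + l) mod M) {..<M} {..<M}"
  proof -
    have inj: "inj_on (\<lambda>l. (a + l) mod M) {..<M}"
    proof
      fix l l' assume l: "l \<in> {..<M}" "l' \<in> {..<M}" "(a + l) mod M = (a + l') mod M"
      hence e: "(a mod M + l) mod M = (a mod M + l') mod M" by (simp add: mod_add_left_eq)
      have r: "a mod M < M" using M0 by simp
      have b2: "a mod M + l < 2 * M" "a mod M + l' < 2 * M"
      proof -
        have "l < M" "l' < M" using l(1,2) by auto
        thus "a mod M + l < 2 * M" "a mod M + l' < 2 * M" using r by linarith+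
      qed
      have "l < M" "l' < M" using l(1,2) by auto
      thus "l = l'" using e[unfolded mod_2M[OF b2(1)] mod_2M[OF b2(2)]]
        by (auto split: if_splits)
    qed
    moreover have "(\<lambda>l. (a + l) mod M) ` {..<M} = {..<M}"
      by (rule endo_inj_surj) (use inj M0 in auto)
    ultimately show ?thesis by (simp add: bij_betw_def)
  qed
  show ?thesis by (rule sum.reindex_bij_betw[OF bij, symmetric])
qed

lemma window:
  assumes MN: "M = 2 * N" and us: "u \<le> s"
    and H: "\<And>k. k < M \<Longrightarrow> N - s \<le> k \<Longrightarrow> k \<le> N + s \<Longrightarrow> B u x y k = 0"
  shows "k < M \<Longrightarrow> B u x y k = 0"
proof (rule ccontr)
  assume k0M: "k < M" and nz: "B u x y k \<noteq> 0"
  have sN: "s < N" using H[OF k0M] nz k0M MN by (cases "s < N") auto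
  define a where "a = N + s + 1"
  define L where "L = M - 2 * s - 1"
  define \<gamma> where "\<gamma> l = B u x y ((a + l) mod M)" for l
  have L1: "L \<ge> 1" using sN MN by (simp add: L_def)
  have PPeq: "PP u x y t = (\<Sum>l<L. \<gamma> l * S l (S a t))" for t
  proof -
    have "PP u x y t = (\<Sum>l<M. B u x y ((a + l) mod M) * S ((a + l) mod M) t)"
      unfolding PP_expand by (rule sum_cyclic[OF k0M])
    also have "\<dots> = (\<Sum>l<M. \<gamma> l * S l (S a t))"
    proof (rule sum.cong[OF refl])
      fix l
      have "S l (S a t) = S (l + a) t" by (rule sg_comp)
      also have "\<dots> = S ((l + a) mod M) t" by (rule sg_mod)
      finally show "B u x y ((a + l) mod M) * S ((a + l) mod M) t = \<gamma> l * S l (S a t)"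
        by (simp add: \<gamma>_def add.commute)
    qed
    also have "\<dots> = (\<Sum>l<L. \<gamma> l * S l (S a t)) + (\<Sum>l\<in>{L..<M}. \<gamma> l * S l (S a t))"
      using L_def by (subst sum.atLeastLessThan_concat[of 0 L M, symmetric, simplified atLeast0LessThan]) auto
    also have "(\<Sum>l\<in>{L..<M}. \<gamma> l * S l (S a t)) = 0"
    proof (rule sum.neutral, rule ballI)
      fix l assume l: "l \<in> {L..<M}"
      have l1: "M \<le> a + l" "a + l - M < M" "N - s \<le> a + l - M" "a + l - M \<le> N + s"
        using l sN MN by (auto simp: a_def L_def)
      have "(a + l) mod M = (a + l - M) mod M" using l1(1) by (rule le_mod_geq)
      also have "\<dots> = a + l - M" using l1(2) by simp
      finally have "(a + l) mod M = a + l - M" .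
      moreover note l1
      ultimately have "\<gamma> l = 0" unfolding \<gamma>_def using H by simp
      thus "\<gamma> l * S l (S a t) = 0" by simp
    qed
    finally show ?thesis by simp
  qed
  have gnz: "\<exists>l<L. \<gamma> l \<noteq> 0"
  proof (cases "k > N + s")
    case True
    hence "(a + (k - a)) mod M = k" using k0M by (simp add: a_def)
    moreover have "k - a < L" using True k0M sN MN by (simp add: a_def L_def)
    ultimately show ?thesis using nz by (auto simp: \<gamma>_def)
  next
    case False
    hence kl: "k < N - s" using H[OF k0M] nz by force
    have "a + (k + M - a) = k + M" using sN MN by (simp add: a_def)
    hence "(a + (k + M - a)) mod M = k" using k0M by simp
    moreover have "k + M - a < L" using kl sN MN by (simp add: a_def L_def)
    ultimately show ?thesis using nz by (auto simp: \<gamma>_def)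
  qed
  have injSa: "inj (S a)" by (auto simp: inj_def intro: sg_inj)
  have surjSa: "surj (S a)" by (rule finite_UNIV_inj_surj[OF _ injSa]) simp
  have "{t. PP u x y t = 0} = S a -` {w. (\<Sum>l<L. \<gamma> l * S l w) = 0}" using PPeq by auto
  hence "card {t. PP u x y t = 0} = card (S a -` {w. (\<Sum>l<L. \<gamma> l * S l w) = 0})"
    by simp
  also have "\<dots> = card {w. (\<Sum>l<L. \<gamma> l * S l w) = 0}"
    by (rule card_vimage_inj[OF injSa]) (simp add: surjSa)
  also have "\<dots> \<le> card FF ^ (L - 1)" by (rule ker_bound[OF L1 gnz])
  finally have ker: "card {t. PP u x y t = 0} \<le> card FF ^ (L - 1)" .
  have "card FF ^ M = card (UNIV :: 'a set)" using cardK' by simp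
  also have "\<dots> = card {t. PP u x y t = 0} * card (range (PP u x y))"
    by (rule kernel_image_card) (rule PP_add)
  also have "\<dots> \<le> card FF ^ (L - 1) * card FF ^ (2 * u)"
    by (rule mult_le_mono[OF ker card_range_PP])
  also have "\<dots> = card FF ^ (L - 1 + 2 * u)" by (simp add: power_add)
  finally have "M \<le> L - 1 + 2 * u" using power_le_imp_le_exp[OF FF_gt1] by blast
  thus False using us sN MN by (simp add: L_def)
qed

end



context fset begin

lemma T_lin: "(\<And>j. j \<in> J \<Longrightarrow> c j \<in> FF) \<Longrightarrow>
   T (z * (\<Sum>j\<in>J. c j * v j)) = (\<Sum>j\<in>J. c j * T (z * v j))"
proof -
  assume c: "\<And>j. j \<in> J \<Longrightarrow> c j \<in> FF"
  have "T (z * (\<Sum>j\<in>J. c j * v j)) = T (\<Sum>j\<in>J. c j * (z * v j))"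
    by (simp add: sum_distrib_left algebra_simps)
  also have "\<dots> = (\<Sum>j\<in>J. T (c j * (z * v j)))" by (rule T_sum)
  also have "\<dots> = (\<Sum>j\<in>J. c j * T (z * v j))" by (rule sum.cong) (auto simp: T_scal c)
  finally show ?thesis .
qed

lemma T_comm: "T (a * b) = T (b * a)" by (simp add: mult.commute)

lemma indep_SucD: "indep e (Suc u) (y :: nat \<Rightarrow> 'a) \<Longrightarrow> indep e u y"
  unfolding indep_def
proof (intro allI impI)
  fix c :: "nat \<Rightarrow> 'a" and i
  assume H: "\<forall>c. (\<forall>i<Suc u. c i \<in> subF e) \<longrightarrow> (\<Sum>i<Suc u. c i * y i) = 0 \<longrightarrow> (\<forall>i<Suc u. c i = 0)"
    and c: "\<forall>i<u. c i \<in> subF e" and s: "(\<Sum>i<u. c i * y i) = 0" and iu: "i < u"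
  have A: "\<forall>i<Suc u. (c(u := 0)) i \<in> subF e" using c by (auto simp: less_Suc_eq)
  have "(\<Sum>i<u. (c(u := 0)) i * y i) = (\<Sum>i<u. c i * y i)" by (intro sum.cong) auto
  hence B': "(\<Sum>i<Suc u. (c(u := 0)) i * y i) = 0" using s by simp
  have "\<forall>i<Suc u. (c(u := 0)) i = 0" using H A B' by blast
  hence "(c(u := 0)) i = 0" using iu less_Suc_eq by blast
  thus "c i = 0" using iu by simp
qed

lemma delta_sum: "i < (u::nat) \<Longrightarrow> (\<Sum>j<u. c j * (if i = j then 1 else 0)) = (c i :: 'a)"
proof -
  assume iu: "i < u"
  have "(\<Sum>j<u. c j * (if i = j then 1 else 0)) = c i * (if i = i then 1 else 0)
     + (\<Sum>j\<in>{..<u} - {i}. c j * (if i = j then 1 else 0))"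
    by (rule sum.remove) (simp_all add: iu)
  also have "(\<Sum>j\<in>{..<u} - {i}. c j * (if i = j then 1 else 0)) = 0"
    by (intro sum.neutral) auto
  finally show ?thesis by simp
qed

lemma dual:
  "indep e u y \<Longrightarrow> \<exists>\<tau>. \<forall>i<u. \<forall>j<u. T (y i * \<tau> j) = (if i = j then 1 else 0)"
proof (induction u)
  case 0 thus ?case by simp
next
  case (Suc u)
  from Suc.IH[OF indep_SucD[OF Suc.prems]] obtain \<tau>' where
    tau': "\<forall>i<u. \<forall>j<u. T (y i * \<tau>' j) = (if i = j then 1 else 0)" by blast
  define w where "w = y u + (\<Sum>j<u. T (y u * \<tau>' j) * y j)"
  have w0: "w \<noteq> 0"
  proof
    assume w: "w = 0"
    define c where "c j = (if j < u then T (y u * \<tau>' j) else 1)" for j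
    have "(\<Sum>i<Suc u. c i * y i) = w" by (simp add: c_def w_def add.commute)
    moreover have "\<forall>i<Suc u. c i \<in> FF" by (auto simp: c_def T_F)
    ultimately have "\<forall>i<Suc u. c i = 0" using Suc.prems w unfolding indep_def by blast
    thus False by (auto simp: c_def)
  qed
  obtain r where r: "T r \<noteq> 0" using T_nonzero by blast
  define s where "s = r / (T r * w)"
  have Tws: "T (w * s) = 1"
  proof -
    have "w * s = inverse (T r) * r" using w0 r by (simp add: s_def field_simps)
    hence "T (w * s) = inverse (T r) * T r" by (simp add: T_scal F_inv T_F)
    thus ?thesis using r by simp
  qed
  define tu where "tu = s + (\<Sum>j<u. T (y j * s) * \<tau>' j)"
  have Ttu: "T (y i * tu) = 0" if "i < u" for i
  proof -
    have "T (y i * tu) = T (y i * s) + (\<Sum>j<u. T (y j * s) * T (y i * \<tau>' j))"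
      by (simp add: tu_def distrib_left T_add T_lin T_F)
    also have "(\<Sum>j<u. T (y j * s) * T (y i * \<tau>' j)) = T (y i * s)"
      using tau' that by (simp add: delta_sum)
    finally show ?thesis by (simp add: add_self)
  qed
  have Tutu: "T (y u * tu) = 1"
  proof -
    have "T (y u * tu) = T (y u * s) + (\<Sum>j<u. T (y j * s) * T (y u * \<tau>' j))"
      by (simp add: tu_def distrib_left T_add T_lin T_F)
    also have "(\<Sum>j<u. T (y j * s) * T (y u * \<tau>' j)) = (\<Sum>j<u. T (y u * \<tau>' j) * T (y j * s))"
      by (simp add: mult.commute)
    also have "\<dots> = T (s * (\<Sum>j<u. T (y u * \<tau>' j) * y j))"
      by (subst T_lin) (auto simp: T_F mult.commute)
    also have "T (y u * s) + \<dots> = T (w * s)"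
    proof -
      have "w * s = y u * s + s * (\<Sum>j<u. T (y u * \<tau>' j) * y j)"
        by (simp add: w_def ring_distribs mult.commute)
      thus ?thesis by (simp only: T_add)
    qed
    finally show ?thesis using Tws by simp
  qed
  define \<tau> where "\<tau> j = (if j < u then \<tau>' j + T (y u * \<tau>' j) * tu else tu)" for j
  have "\<forall>i<Suc u. \<forall>j<Suc u. T (y i * \<tau> j) = (if i = j then 1 else 0)"
  proof (intro allI impI)
    fix i j assume i: "i < Suc u" and j: "j < Suc u"
    show "T (y i * \<tau> j) = (if i = j then 1 else 0)"
    proof (cases "j < u")
      case True
      have e1: "T (y i * \<tau> j) = T (y i * \<tau>' j) + T (y u * \<tau>' j) * T (y i * tu)"
        using True by (simp add: \<tau>_def distrib_left T_add mult.left_commute[of "y i"] T_scal T_F)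
      show ?thesis
      proof (cases "i < u")
        case True
        thus ?thesis using e1 tau' Ttu \<open>j < u\<close> by simp
      next
        case False
        hence "i = u" using i by simp
        thus ?thesis using e1 Tutu True by (simp add: add_self)
      qed
    next
      case False
      hence ju: "j = u" using j by simp
      show ?thesis
      proof (cases "i < u")
        case True thus ?thesis using ju Ttu by (simp add: \<tau>_def)
      next
        case False
        hence "i = u" using i by simp
        thus ?thesis using ju Tutu by (simp add: \<tau>_def)
      qed
    qed
  qed
  thus ?case by blast
qed

lemma sol_char:
  assumes ind: "indep e u y" and Bz: "\<And>k. k < M \<Longrightarrow> B u x y k = 0"
  shows "\<exists>C. (\<forall>i j. C i j \<in> FF) \<and> (\<forall>i<u. \<forall>j<u. C i j = C j i) \<and>
              (\<forall>j<u. x j = (\<Sum>i<u. C j i * y i))"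
proof -
  obtain \<tau> where tau: "\<forall>i<u. \<forall>j<u. T (y i * \<tau> j) = (if i = j then 1 else 0)"
    using dual[OF ind] by blast
  have P0: "PP u x y t = 0" for t using Bz by (simp add: PP_expand)
  have eqn: "(\<Sum>i<u. x i * T (y i * t)) = (\<Sum>i<u. y i * T (x i * t))" for t
  proof -
    have "(\<Sum>i<u. x i * T (y i * t)) + (\<Sum>i<u. y i * T (x i * t)) = 0"
      using P0[of t] by (simp add: PP_def sum.distrib)
    thus ?thesis by (metis add_self add_right_cancel)
  qed
  define C where "C j i = T (x i * \<tau> j)" for j i
  have xj: "x j = (\<Sum>i<u. C j i * y i)" if "j < u" for j
  proof -
    have "x j = (\<Sum>i<u. x i * (if i = j then 1 else 0))" using that by (simp add: if_distrib cong: if_cong)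
    also have "\<dots> = (\<Sum>i<u. x i * T (y i * \<tau> j))" using tau that by simp
    also have "\<dots> = (\<Sum>i<u. y i * T (x i * \<tau> j))" by (rule eqn)
    finally show ?thesis by (simp add: C_def mult.commute)
  qed
  have sym: "C i j = C j i" if "i < u" "j < u" for i j
  proof -
    have "C j i = T (\<tau> j * (\<Sum>l<u. C i l * y l))" using xj[OF that(1)] by (simp add: C_def mult.commute)
    also have "\<dots> = (\<Sum>l<u. C i l * T (\<tau> j * y l))" by (rule T_lin) (simp add: C_def T_F)
    also have "\<dots> = (\<Sum>l<u. C i l * (if l = j then 1 else 0))"
      using tau that by (intro sum.cong) (auto simp: mult.commute)
    also have "\<dots> = C i j" using that by (simp add: if_distrib cong: if_cong)
    finally show ?thesis by simp
  qed
  show ?thesis using xj sym by (intro exI[of _ C]) (auto simp: C_def T_F)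
qed

lemma sol_conv:
  assumes CF: "\<And>i j. C i j \<in> FF" and sym: "\<And>i j. i < u \<Longrightarrow> j < u \<Longrightarrow> C i j = C j i"
    and xj: "\<And>j. j < u \<Longrightarrow> x j = (\<Sum>i<u. C j i * y i)"
  shows "B u x y k = 0"
proof -
  have Sx: "S k (x i) = (\<Sum>j<u. C i j * S k (y j))" if "i < u" for i
    using xj[OF that] by (simp add: sg_sum sg_mult sg_F CF)
  define A1 where "A1 = (\<Sum>i<u. \<Sum>j<u. C i j * y j * S k (y i))"
  have "(\<Sum>i<u. x i * S k (y i)) = A1"
    unfolding A1_def by (intro sum.cong) (simp_all add: xj sum_distrib_right)
  moreover have "(\<Sum>i<u. S k (x i) * y i) = A1"
  proof -
    have "(\<Sum>i<u. S k (x i) * y i) = (\<Sum>i<u. \<Sum>j<u. C i j * S k (y j) * y i)"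
      by (intro sum.cong) (simp_all add: Sx sum_distrib_right)
    also have "\<dots> = (\<Sum>j<u. \<Sum>i<u. C i j * S k (y j) * y i)" by (rule sum.swap)
    also have "\<dots> = (\<Sum>j<u. \<Sum>i<u. C j i * y i * S k (y j))"
      by (intro sum.cong) (auto simp: sym mult.commute mult.left_commute)
    finally show ?thesis by (simp add: A1_def)
  qed
  ultimately show ?thesis by (simp add: beta_def sum.distrib add_self)
qed

end



definition span :: "nat \<Rightarrow> nat \<Rightarrow> (nat \<Rightarrow> 'a::field) \<Rightarrow> 'a set" where
  "span e u y = (\<lambda>c. \<Sum>i<u. c i * y i) ` (\<Pi>\<^sub>E i\<in>{..<u}. subF e)"

definition IT :: "nat \<Rightarrow> nat \<Rightarrow> (nat \<Rightarrow> 'a::field) set" where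
  "IT e u = {y. indep e u y \<and> (\<forall>i\<ge>u. y i = 0)}"

lemma fin_supp: "finite {y :: nat \<Rightarrow> 'a::{finite,zero}. \<forall>i\<ge>u. y i = 0}"
proof -
  have "{y :: nat \<Rightarrow> 'a. \<forall>i\<ge>u. y i = 0} \<subseteq>
        (\<lambda>f i. if i < u then f i else 0) ` (\<Pi>\<^sub>E i\<in>{..<u}. UNIV)"
  proof
    fix y :: "nat \<Rightarrow> 'a" assume y: "y \<in> {y. \<forall>i\<ge>u. y i = 0}"
    show "y \<in> (\<lambda>f i. if i < u then f i else 0) ` (\<Pi>\<^sub>E i\<in>{..<u}. UNIV)"
      by (rule rev_image_eqI[of "restrict y {..<u}"]) (use y in \<open>auto simp: fun_eq_iff\<close>)
  qed
  moreover have "finite ((\<lambda>f i. if i < u then f i else (0::'a)) ` (\<Pi>\<^sub>E i\<in>{..<u}. UNIV))"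
    by (intro finite_imageI finite_PiE) auto
  ultimately show ?thesis by (rule finite_subset)
qed

lemma indep_cong: "(\<And>i. i < u \<Longrightarrow> y i = y' i) \<Longrightarrow> indep e u y = indep e u y'"
proof -
  assume h: "\<And>i. i < u \<Longrightarrow> y i = y' i"
  have "(\<Sum>i<u. c i * y i) = (\<Sum>i<u. c i * y' i)" for c using h by (intro sum.cong) auto
  thus ?thesis unfolding indep_def by simp
qed

lemma span_cong: "(\<And>i. i < u \<Longrightarrow> y i = y' i) \<Longrightarrow> span e u y = span e u y'"
  unfolding span_def by (intro image_cong) (auto intro: sum.cong)

context fset begin

lemma card_span: "indep e u (y :: nat \<Rightarrow> 'a) \<Longrightarrow> card (span e u y) = card FF ^ u"
proof -
  assume ind: "indep e u y"
  have "inj_on (\<lambda>c. \<Sum>i<u. c i * y i) (\<Pi>\<^sub>E i\<in>{..<u}. FF)"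
  proof
    fix c c' assume c: "c \<in> (\<Pi>\<^sub>E i\<in>{..<u}. FF)" and c': "c' \<in> (\<Pi>\<^sub>E i\<in>{..<u}. FF)"
      and eq: "(\<Sum>i<u. c i * y i) = (\<Sum>i<u. c' i * y i)"
    have h1: "(\<Sum>i<u. (c i - c' i) * y i) = 0" using eq by (simp add: algebra_simps sum_subtractf)
    have h2: "\<forall>i<u. c i - c' i \<in> FF" using c c' by (auto intro: F_diff)
    have "\<forall>i<u. c i - c' i = 0"
      using spec[OF ind[unfolded indep_def], of "\<lambda>i. c i - c' i"] h1 h2 by blast
    thus "c = c'" using c c' by (intro PiE_ext[OF c c']) auto
  qed
  hence "card (span e u y) = card (\<Pi>\<^sub>E i\<in>{..<u}. FF)" unfolding span_def by (rule card_image)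
  thus ?thesis by (simp add: card_PiE)
qed

lemma indep_Suc_iff: "indep e (Suc u) y \<longleftrightarrow> indep e u y \<and> y u \<notin> span e u (y :: nat \<Rightarrow> 'a)"
proof
  assume ind: "indep e (Suc u) y"
  have "y u \<notin> span e u y"
  proof
    assume "y u \<in> span e u y"
    then obtain c where c: "c \<in> (\<Pi>\<^sub>E i\<in>{..<u}. FF)" and yu: "y u = (\<Sum>i<u. c i * y i)"
      unfolding span_def by blast
    define c' where "c' i = (if i < u then c i else 1)" for i
    have "(\<Sum>i<Suc u. c' i * y i) = (\<Sum>i<u. c i * y i) + y u" by (simp add: c'_def)
    also have "\<dots> = 0" using yu by (simp add: add_self)
    finally have "(\<Sum>i<Suc u. c' i * y i) = 0" .
    moreover have "\<forall>i<Suc u. c' i \<in> FF" using c by (auto simp: c'_def)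
    ultimately have "c' u = 0" using ind unfolding indep_def by blast
    thus False by (simp add: c'_def)
  qed
  thus "indep e u y \<and> y u \<notin> span e u y" using indep_SucD[OF ind] by simp
next
  assume H: "indep e u y \<and> y u \<notin> span e u y"
  show "indep e (Suc u) y" unfolding indep_def
  proof (intro allI impI)
    fix c :: "nat \<Rightarrow> 'a" and i
    assume cF: "\<forall>i<Suc u. c i \<in> subF e" and s: "(\<Sum>i<Suc u. c i * y i) = 0" and i: "i < Suc u"
    have s': "(\<Sum>i<u. c i * y i) + c u * y u = 0" using s by simp
    show "c i = 0"
    proof (cases "c u = 0")
      case True
      hence "(\<Sum>i<u. c i * y i) = 0" using s' by simp
      hence "\<forall>i<u. c i = 0" using H cF unfolding indep_def by auto
      thus ?thesis using True i less_Suc_eq by auto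
    next
      case False
      have "c u * y u = (\<Sum>i<u. c i * y i)" using s' by (metis add_self add_right_cancel add.commute)
      hence "y u = (\<Sum>i<u. (c i / c u) * y i)" using False
        by (simp add: sum_divide_distrib[symmetric] field_simps)
      also have "\<dots> = (\<Sum>i<u. restrict (\<lambda>i. c i / c u) {..<u} i * y i)" by simp
      finally have "y u \<in> span e u y" unfolding span_def
        using cF by (intro rev_image_eqI[of "restrict (\<lambda>i. c i / c u) {..<u}"]) (auto intro: F_div)
      thus ?thesis using H by simp
    qed
  qed
qed

lemma card_IT: "card (IT e u :: (nat \<Rightarrow> 'a) set) = (\<Prod>i<u. card (UNIV :: 'a set) - card FF ^ i)"
proof (induction u)
  case 0
  have "IT e 0 = {(\<lambda>_. 0) :: nat \<Rightarrow> 'a}" by (auto simp: IT_def indep_def)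
  thus ?case by simp
next
  case (Suc u)
  let ?f = "\<lambda>(y :: nat \<Rightarrow> 'a, v :: 'a). y(u := v)"
  let ?A = "SIGMA y:(IT e u :: (nat \<Rightarrow> 'a) set). UNIV - span e u y"
  have eq: "IT e (Suc u) = ?f ` ?A"
  proof (intro set_eqI iffI)
    fix z :: "nat \<Rightarrow> 'a" assume z: "z \<in> IT e (Suc u)"
    have c1: "indep e u (z(u:=0)) = indep e u z" by (rule indep_cong) simp
    have c2: "span e u (z(u:=0)) = span e u z" by (rule span_cong) simp
    have zz: "indep e u z \<and> z u \<notin> span e u z" using z indep_Suc_iff[of u z] by (simp add: IT_def)
    have i1: "indep e u (z(u := 0))" using zz c1 by simp
    have i2: "z u \<notin> span e u (z(u := 0))" using zz c2 by simp
    have "z(u := 0) \<in> IT e u" using i1 z by (auto simp: IT_def)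
    moreover have "z = ?f (z(u := 0), z u)" by simp
    ultimately show "z \<in> ?f ` ?A" using i2 by (intro rev_image_eqI[of "(z(u := 0), z u)"]) auto
  next
    fix z assume "z \<in> ?f ` ?A"
    then obtain y v where y: "y \<in> IT e u" and v: "v \<notin> span e u y" and z: "z = y(u := v)" by auto
    have "indep e u z" using y z indep_cong[of u y z] by (simp add: IT_def)
    moreover have "z u \<notin> span e u z" using v z span_cong[of u y z] by simp
    ultimately have "indep e (Suc u) z" using indep_Suc_iff by blast
    thus "z \<in> IT e (Suc u)" using y z by (auto simp: IT_def)
  qed
  have inj: "inj_on ?f ?A"
  proof (rule inj_onI, clarify)
    fix y v y' v' assume y: "y \<in> IT e u" "y' \<in> IT e u" and e: "y(u := v) = y'(u := v')"
    have "v = v'" using fun_cong[OF e, of u] by simp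
    moreover have "y = y'"
    proof
      fix i show "y i = y' i" using y fun_cong[OF e, of i] by (cases "i = u") (auto simp: IT_def)
    qed
    ultimately show "y = y' \<and> v = v'" by simp
  qed
  have finIT: "finite (IT e u :: (nat \<Rightarrow> 'a) set)"
    by (rule finite_subset[OF _ fin_supp[of u]]) (auto simp: IT_def)
  have "card (IT e (Suc u) :: (nat \<Rightarrow> 'a) set) = card ?A" unfolding eq by (rule card_image[OF inj])
  also have "\<dots> = (\<Sum>y\<in>(IT e u :: (nat \<Rightarrow> 'a) set). card (UNIV - span e u y))" by (rule card_SigmaI) (simp_all add: finIT)
  also have "\<dots> = (\<Sum>y\<in>(IT e u :: (nat \<Rightarrow> 'a) set). card (UNIV :: 'a set) - card FF ^ u)"
    by (intro sum.cong) (auto simp: IT_def card_Diff_subset card_span)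
  also have "\<dots> = card (IT e u :: (nat \<Rightarrow> 'a) set) * (card (UNIV :: 'a set) - card FF ^ u)" by simp
  finally show ?case using Suc.IH by simp
qed

definition SM :: "nat \<Rightarrow> (nat \<Rightarrow> nat \<Rightarrow> 'a) set" where
  "SM u = {C. (\<forall>i j. C i j \<in> FF) \<and> (\<forall>i j. C i j = C j i) \<and> (\<forall>i j. \<not> (i < u \<and> j < u) \<longrightarrow> C i j = 0)}"

definition Tri :: "nat \<Rightarrow> (nat \<times> nat) set" where "Tri u = {(i, j). j \<le> i \<and> i < u}"

lemma card_Tri: "2 * card (Tri u) = u * (u + 1)"
proof (induction u)
  case 0 thus ?case by (simp add: Tri_def)
next
  case (Suc u)
  have "Tri (Suc u) = Tri u \<union> (\<lambda>j. (u, j)) ` {..u}" by (auto simp: Tri_def)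
  moreover have "Tri u \<inter> (\<lambda>j. (u, j)) ` {..u} = {}" by (auto simp: Tri_def)
  moreover have "finite (Tri u)" by (rule finite_subset[of _ "{..<u} \<times> {..<u}"]) (auto simp: Tri_def)
  moreover have "card ((\<lambda>j. (u, j)) ` {..u}) = Suc u" by (subst card_image) (auto simp: inj_on_def)
  ultimately have "card (Tri (Suc u)) = card (Tri u) + Suc u" by (simp add: card_Un_disjoint)
  thus ?case using Suc.IH by simp
qed

lemma finTri: "finite (Tri u)"
  by (rule finite_subset[of _ "{..<u} \<times> {..<u}"]) (auto simp: Tri_def)

lemma card_SM: "card (SM u) = card FF ^ card (Tri u)"
proof -
  let ?phi = "\<lambda>C. restrict (\<lambda>(i, j). C i j) (Tri u)"
  let ?psi = "\<lambda>g i j. if i < u \<and> j < u then g (max i j, min i j) else 0"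
  have "bij_betw ?phi (SM u) (\<Pi>\<^sub>E p\<in>Tri u. FF)"
  proof (rule bij_betw_byWitness[where f' = ?psi])
    show "\<forall>C\<in>SM u. ?psi (?phi C) = C"
    proof
      fix C assume C: "C \<in> SM u"
      show "?psi (?phi C) = C"
      proof (intro ext)
        fix i j show "?psi (?phi C) i j = C i j"
          using C by (cases "j \<le> i") (auto simp: SM_def Tri_def max_def min_def)
      qed
    qed
    show "\<forall>g\<in>\<Pi>\<^sub>E p\<in>Tri u. FF. ?phi (?psi g) = g"
    proof
      fix g assume g: "g \<in> (\<Pi>\<^sub>E p\<in>Tri u. FF)"
      show "?phi (?psi g) = g"
      proof (rule PiE_ext[OF _ g])
        show "?phi (?psi g) \<in> (\<Pi>\<^sub>E p\<in>Tri u. FF)" using g by (auto simp: Tri_def max_def min_def)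
        fix p assume "p \<in> Tri u"
        thus "?phi (?psi g) p = g p" by (auto simp: Tri_def max_def min_def)
      qed
    qed
    show "?phi ` SM u \<subseteq> (\<Pi>\<^sub>E p\<in>Tri u. FF)" by (auto simp: SM_def)
    show "?psi ` (\<Pi>\<^sub>E p\<in>Tri u. FF) \<subseteq> SM u"
    proof
      fix C assume "C \<in> ?psi ` (\<Pi>\<^sub>E p\<in>Tri u. FF)"
      then obtain g where g: "g \<in> (\<Pi>\<^sub>E p\<in>Tri u. FF)" and C: "C = ?psi g" by blast
      have "C i j \<in> FF" for i j using g unfolding C by (auto simp: Tri_def max_def min_def)
      moreover have "C i j = C j i" for i j unfolding C by (auto simp: max_def min_def)
      ultimately show "C \<in> SM u" by (auto simp: SM_def C)
    qed
  qed
  hence "card (SM u) = card (\<Pi>\<^sub>E p\<in>Tri u. FF)" by (rule bij_betw_same_card)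
  also have "\<dots> = card FF ^ card (Tri u)"
    using card_PiE[OF finTri[of u], of "\<lambda>_. FF"] by simp
  finally show ?thesis .
qed

definition Sol :: "nat \<Rightarrow> (nat \<Rightarrow> 'a) \<Rightarrow> (nat \<Rightarrow> 'a) set" where
  "Sol u y = {x. (\<forall>i\<ge>u. x i = 0) \<and> (\<forall>k<M. B u x y k = 0)}"

lemma card_Sol: "indep e u y \<Longrightarrow> card (Sol u y) = card (SM u)"
proof -
  assume ind: "indep e u y"
  let ?g = "\<lambda>C j. if j < u then \<Sum>i<u. C j i * y i else 0"
  have eq: "Sol u y = ?g ` SM u"
  proof (intro set_eqI iffI)
    fix x assume x: "x \<in> Sol u y"
    then obtain C where CF: "\<forall>i j. C i j \<in> FF" and sym: "\<forall>i<u. \<forall>j<u. C i j = C j i"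
      and xj: "\<forall>j<u. x j = (\<Sum>i<u. C j i * y i)"
      using sol_char[OF ind, of x] by (auto simp: Sol_def)
    define C' where "C' i j = (if i < u \<and> j < u then C i j else 0)" for i j
    have "C' \<in> SM u" using CF sym by (auto simp: SM_def C'_def)
    moreover have "x = ?g C'"
    proof
      fix j show "x j = ?g C' j" using x xj by (auto simp: Sol_def C'_def intro: sum.cong)
    qed
    ultimately show "x \<in> ?g ` SM u" by blast
  next
    fix x assume "x \<in> ?g ` SM u"
    then obtain C where C: "C \<in> SM u" and x: "x = ?g C" by blast
    have "B u x y k = 0" for k
      by (rule sol_conv[of C]) (use C x in \<open>auto simp: SM_def\<close>)
    thus "x \<in> Sol u y" using x by (auto simp: Sol_def)
  qed
  have "inj_on ?g (SM u)"
  proof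
    fix C C' assume C: "C \<in> SM u" and C': "C' \<in> SM u" and e: "?g C = ?g C'"
    show "C = C'"
    proof (intro ext)
      fix j i show "C j i = C' j i"
      proof (cases "j < u \<and> i < u")
        case True
        have "(\<Sum>i<u. C j i * y i) = (\<Sum>i<u. C' j i * y i)" using fun_cong[OF e, of j] True by simp
        hence h1: "(\<Sum>i<u. (C j i - C' j i) * y i) = 0" by (simp add: algebra_simps sum_subtractf)
        have h2: "\<forall>i<u. C j i - C' j i \<in> FF" using C C' by (auto simp: SM_def intro: F_diff)
        have "\<forall>i<u. C j i - C' j i = 0"
          using spec[OF ind[unfolded indep_def], of "\<lambda>i. C j i - C' j i"] h1 h2 by blast
        thus ?thesis using True by simp
      next
        case False thus ?thesis using C C' by (auto simp: SM_def)
      qed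
    qed
  qed
  thus ?thesis unfolding eq by (rule card_image)
qed

end



definition XX :: "nat \<Rightarrow> 'a::zero list \<Rightarrow> nat \<Rightarrow> 'a" where
  "XX u xs i = (if i < u then xs ! (2 * i) else 0)"
definition YY :: "nat \<Rightarrow> 'a::zero list \<Rightarrow> nat \<Rightarrow> 'a" where
  "YY u xs i = (if i < u then xs ! (2 * i + 1) else 0)"

lemma sum_1u: "(\<Sum>i=1..u. g i) = (\<Sum>i<u. g (Suc i))"
  by (induction u) simp_all

context fset begin

lemma frob_S: "frob m (k * int d) z = S (nat (k mod int M)) (z::'a)"
proof -
  obtain c where Md: "M * d = m * c" using mdvd by blast
  have "k = k mod int M + int M * (k div int M)" by simp
  hence "k * int d = (k mod int M) * int d + (int M * int d) * (k div int M)"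
    by (metis (no_types, lifting) distrib_right mult.assoc mult.commute)
  also have "int M * int d = int m * int c" using Md by (metis of_nat_mult)
  finally have "k * int d = (k mod int M) * int d + int m * (int c * (k div int M))"
    by (simp add: mult.assoc)
  hence "(k * int d) mod int m = ((k mod int M) * int d) mod int m" by simp
  moreover have "nat (((k mod int M) * int d) mod int m) = nat (k mod int M) * d mod m"
    using M0 m0 by (simp add: nat_mod_distrib nat_mult_distrib)
  ultimately show ?thesis by (simp add: frob_def sg_def)
qed

lemma V_cond:
  assumes len: "length xs = 2 * u"
  shows "(\<Sum>i=1..u. xs ! (2 * i - 2) * frob m (k * int d) (xs ! (2 * i - 1))
          + frob m (k * int d) (xs ! (2 * i - 2)) * xs ! (2 * i - 1))
       = B u (XX u xs) (YY u xs) (nat (k mod int M))"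
  unfolding sum_1u beta_def frob_S
  by (intro sum.cong) (auto simp: XX_def YY_def)

lemma cond_iff:
  assumes MN: "M = 2 * N" and us: "u \<le> s"
  shows "(\<forall>j\<in>{0..s}. B u x y (nat ((int N - int j) mod int M)) = 0) \<longleftrightarrow> (\<forall>k<M. B u x y k = 0)"
proof
  assume H: "\<forall>j\<in>{0..s}. B u x y (nat ((int N - int j) mod int M)) = 0"
  show "\<forall>k<M. B u x y k = 0"
  proof (intro allI impI)
    fix k assume kM: "k < M"
    show "B u x y k = 0"
    proof (rule window[OF MN us _ kM])
      fix k assume k: "k < M" "N - s \<le> k" "k \<le> N + s"
      show "B u x y k = 0"
      proof (cases "k \<le> N")
        case True
        have "int N - int (N - k) = int k" using True by simp
        hence "nat ((int N - int (N - k)) mod int M) = k" using k by simp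
        moreover have "N - k \<in> {0..s}" using k by simp
        ultimately show ?thesis using H by metis
      next
        case False
        have "int N - int (k - N) = int (M - k)" using False k MN by simp
        moreover have "M - k < M" using False MN M0 by simp
        ultimately have "nat ((int N - int (k - N)) mod int M) = M - k" by simp
        moreover have "k - N \<in> {0..s}" using k by simp
        ultimately have "B u x y (M - k) = 0" using H by metis
        hence "B u x y (M - (M - k)) = 0" by (rule B_zero_sym[rotated]) simp
        thus ?thesis using k by simp
      qed
    qed
  qed
next
  assume H: "\<forall>k<M. B u x y k = 0"
  show "\<forall>j\<in>{0..s}. B u x y (nat ((int N - int j) mod int M)) = 0"
  proof
    fix j
    have "nat ((int N - int j) mod int M) < M" using M0 by (simp add: nat_less_iff)
    thus "B u x y (nat ((int N - int j) mod int M)) = 0" using H by simp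
  qed
qed

lemma V0_indep:
  "({c. (\<forall>i. c i \<in> FF) \<and> (\<forall>i. i \<notin> {1..u} \<longrightarrow> c i = 0) \<and>
        (\<Sum>i=1..u. c i * xs ! (2 * i - 1)) = 0} = {\<lambda>_. 0}) \<longleftrightarrow> indep e u (YY u xs)"
proof -
  have sm: "(\<Sum>i=1..u. c i * xs ! (2 * i - 1)) = (\<Sum>i<u. c (Suc i) * YY u xs i)" for c
    unfolding sum_1u by (intro sum.cong) (auto simp: YY_def)
  show ?thesis
  proof
    assume H: "{c. (\<forall>i. c i \<in> FF) \<and> (\<forall>i. i \<notin> {1..u} \<longrightarrow> c i = 0) \<and>
        (\<Sum>i=1..u. c i * xs ! (2 * i - 1)) = 0} = {\<lambda>_. 0}"
    show "indep e u (YY u xs)" unfolding indep_def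
    proof (intro allI impI)
      fix c' :: "nat \<Rightarrow> 'a" and i
      assume c'F: "\<forall>i<u. c' i \<in> subF e" and s: "(\<Sum>i<u. c' i * YY u xs i) = 0" and iu: "i < u"
      define c where "c i = (if 1 \<le> i \<and> i \<le> u then c' (i - 1) else 0)" for i
      have "(\<Sum>i<u. c (Suc i) * YY u xs i) = (\<Sum>i<u. c' i * YY u xs i)"
        by (intro sum.cong) (auto simp: c_def)
      hence s2: "(\<Sum>i=1..u. c i * xs ! (2 * i - 1)) = 0" using sm[of c] s by simp
      have cF: "\<forall>i. c i \<in> FF" using c'F by (auto simp: c_def)
      have c0: "\<forall>i. i \<notin> {1..u} \<longrightarrow> c i = 0" by (auto simp: c_def)
      have "c \<in> {c. (\<forall>i. c i \<in> FF) \<and> (\<forall>i. i \<notin> {1..u} \<longrightarrow> c i = 0) \<and>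
        (\<Sum>i=1..u. c i * xs ! (2 * i - 1)) = 0}"
        using cF c0 s2 by blast
      hence "c = (\<lambda>_. 0)" using H by blast
      hence "c (Suc i) = 0" by simp
      thus "c' i = 0" using iu by (simp add: c_def)
    qed
  next
    assume ind: "indep e u (YY u xs)"
    show "{c. (\<forall>i. c i \<in> FF) \<and> (\<forall>i. i \<notin> {1..u} \<longrightarrow> c i = 0) \<and>
        (\<Sum>i=1..u. c i * xs ! (2 * i - 1)) = 0} = {\<lambda>_. 0}"
    proof (intro set_eqI iffI)
      fix c assume "c \<in> {c. (\<forall>i. c i \<in> FF) \<and> (\<forall>i. i \<notin> {1..u} \<longrightarrow> c i = 0) \<and>
        (\<Sum>i=1..u. c i * xs ! (2 * i - 1)) = 0}"
      hence cF: "\<forall>i. c i \<in> FF" and c0: "\<forall>i. i \<notin> {1..u} \<longrightarrow> c i = 0"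
        and s0: "(\<Sum>i=1..u. c i * xs ! (2 * i - 1)) = 0" by auto
      have s: "(\<Sum>i<u. c (Suc i) * YY u xs i) = 0" using s0 unfolding sm .
      have "\<forall>i<u. c (Suc i) = 0"
        using spec[OF ind[unfolded indep_def], of "\<lambda>i. c (Suc i)"] cF s by blast
      hence cS: "\<forall>i<u. c (Suc i) = 0" .
      have "c i = 0" for i
      proof (cases "i \<in> {1..u}")
        case True
        then obtain j where "i = Suc j" "j < u" by (cases i) auto
        thus ?thesis using cS by simp
      next
        case False thus ?thesis using c0 by simp
      qed
      thus "c \<in> {\<lambda>_. 0}" by auto
    qed auto
  qed
qed

lemma V0_iff:
  assumes MN: "M = 2 * N" and nN: "n div e = N" and us: "u \<le> s"
  shows "xs \<in> V0 m n d e s u \<longleftrightarrow>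
    length xs = 2 * u \<and> indep e u (YY u xs) \<and> (\<forall>k<M. B u (XX u xs) (YY u xs) k = 0)"
proof -
  have "xs \<in> V m n d e s u \<longleftrightarrow> length xs = 2 * u \<and>
      (\<forall>j\<in>{0..s}. B u (XX u xs) (YY u xs) (nat ((int N - int j) mod int M)) = 0)"
    unfolding V_def using V_cond[of xs u "int N - int _"] nN by auto
  thus ?thesis unfolding V0_def using V0_indep[of u xs] cond_iff[OF MN us] by auto
qed

lemma card_V0:
  assumes MN: "M = 2 * N" and nN: "n div e = N" and us: "u \<le> s"
  shows "card (V0 m n d e s u :: 'a list set) = card (IT e u :: (nat \<Rightarrow> 'a) set) * card FF ^ card (Tri u)"
proof -
  let ?h = "\<lambda>xs :: 'a list. (YY u xs, XX u xs)"
  let ?T = "SIGMA y:(IT e u :: (nat \<Rightarrow> 'a) set). Sol u y"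
  have bij: "bij_betw ?h (V0 m n d e s u) ?T"
  proof (rule bij_betw_imageI)
    show "inj_on ?h (V0 m n d e s u)"
    proof
      fix xs ys :: "'a list" assume xs: "xs \<in> V0 m n d e s u" and ys: "ys \<in> V0 m n d e s u"
        and e: "?h xs = ?h ys"
      have lx: "length xs = 2 * u" and ly: "length ys = 2 * u"
        using xs ys V0_iff[OF MN nN us] by auto
      show "xs = ys"
      proof (rule nth_equalityI)
        show "length xs = length ys" using lx ly by simp
        fix k assume k: "k < length xs"
        have ku: "k div 2 < u" using k lx by simp
        show "xs ! k = ys ! k"
        proof (cases "even k")
          case True
          hence "k = 2 * (k div 2)" by simp
          moreover have "XX u xs (k div 2) = XX u ys (k div 2)" using e by simp
          ultimately show ?thesis using ku by (simp add: XX_def)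
        next
          case False
          hence "k = 2 * (k div 2) + 1" by simp
          moreover have "YY u xs (k div 2) = YY u ys (k div 2)" using e by simp
          ultimately show ?thesis using ku by (simp add: YY_def)
        qed
      qed
    qed
    show "?h ` V0 m n d e s u = ?T"
    proof (intro set_eqI iffI)
      fix p assume "p \<in> ?h ` V0 m n d e s u"
      then obtain xs where xs: "xs \<in> V0 m n d e s u" and p: "p = ?h xs" by blast
      thus "p \<in> ?T" using V0_iff[OF MN nN us, of xs]
        by (auto simp: IT_def Sol_def XX_def YY_def)
    next
      fix p assume p: "p \<in> ?T"
      then obtain y x where y: "y \<in> IT e u" and x: "x \<in> Sol u y" and pe: "p = (y, x)" by blast
      define xs where "xs = map (\<lambda>k. if even k then x (k div 2) else y (k div 2)) [0..<2 * u]"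
      have lx: "length xs = 2 * u" by (simp add: xs_def)
      have X: "XX u xs = x"
      proof
        fix i show "XX u xs i = x i" using x by (auto simp: XX_def xs_def Sol_def)
      qed
      have Y: "YY u xs = y"
      proof
        fix i show "YY u xs i = y i" using y by (auto simp: YY_def xs_def IT_def)
      qed
      have "xs \<in> V0 m n d e s u" using V0_iff[OF MN nN us, of xs] lx X Y x y
        by (auto simp: IT_def Sol_def)
      thus "p \<in> ?h ` V0 m n d e s u" using X Y pe by force
    qed
  qed
  have finIT: "finite (IT e u :: (nat \<Rightarrow> 'a) set)"
    by (rule finite_subset[OF _ fin_supp[of u]]) (auto simp: IT_def)
  have "card (V0 m n d e s u :: 'a list set) = card ?T" by (rule bij_betw_same_card[OF bij])
  also have "\<dots> = (\<Sum>y\<in>(IT e u :: (nat \<Rightarrow> 'a) set). card (Sol u y))"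
    by (rule card_SigmaI[OF finIT]) (auto intro: finite_subset[OF _ fin_supp[of u]] simp: Sol_def)
  also have "\<dots> = (\<Sum>y\<in>(IT e u :: (nat \<Rightarrow> 'a) set). card FF ^ card (Tri u))"
    by (intro sum.cong) (auto simp: IT_def card_Sol card_SM)
  finally show ?thesis by simp
qed

end



theorem lemma6p2:
  fixes m n d e s u :: nat
  assumes "card (UNIV :: ('a::{field,finite}) set) = 2 ^ m"
    and "n > 0" "d > 0" "e > 0" "m = 2 * n"
    and "e = gcd n d" "e = gcd m d"
    and "u \<ge> 2" "s \<ge> u"
  shows "int (card (V0 m n d e s u :: ('a::{field,finite}) list set))
       = 2 ^ (e * u * (u + 1) div 2) * (\<Prod>i=0..<u. (2 ^ m - 2 ^ (e * i) :: int))"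
proof -
  define N where "N = n div e"
  define M where "M = 2 * N"
  have en: "e dvd n" using assms(6) by simp
  have ed: "e dvd d" using assms(6) by simp
  have mM: "m = e * M" using en assms(5) by (simp add: M_def N_def)
  have inst: "fset TYPE('a) m d e M"
    unfolding fset_def
  proof (intro conjI)
    show "0 < m" using assms(2,5) by simp
    show "gcd d m = e" using assms(7) by (simp add: gcd.commute)
  qed (use assms(1,3,4) ed mM in simp_all)
  have cV: "card (V0 m n d e s u :: 'a list set)
      = card (IT e u :: (nat \<Rightarrow> 'a) set) * card (subF e :: 'a set) ^ card (fset.Tri u)"
    by (rule fset.card_V0[OF inst M_def N_def[symmetric] assms(9)])
  have cF: "card (subF e :: 'a set) = 2 ^ e" by (rule fset.cardF[OF inst])
  have cIT: "card (IT e u :: (nat \<Rightarrow> 'a) set) = (\<Prod>i<u. 2 ^ m - (2 ^ e) ^ i)"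
    using fset.card_IT[OF inst, of u] cF assms(1) by simp
  have cT: "2 * card (fset.Tri u) = u * (u + 1)" by (rule fset.card_Tri[OF inst])
  have ex: "e * u * (u + 1) div 2 = e * card (fset.Tri u)"
  proof -
    have "e * u * (u + 1) = e * (u * (u + 1))" by (simp only: mult.assoc)
    also have "\<dots> = e * (2 * card (fset.Tri u))" by (simp only: cT)
    also have "\<dots> = 2 * (e * card (fset.Tri u))" by (simp only: mult.left_commute)
    finally have "e * u * (u + 1) = 2 * (e * card (fset.Tri u))" .
    thus ?thesis by simp
  qed
  have prodeq: "int (\<Prod>i<u. 2 ^ m - (2 ^ e) ^ i) = (\<Prod>i=0..<u. (2 ^ m - 2 ^ (e * i) :: int))"
  proof (cases "u \<le> M")
    case True
    have "int (\<Prod>i<u. 2 ^ m - (2 ^ e) ^ i) = (\<Prod>i<u. int (2 ^ m - (2 ^ e) ^ i))" by simp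
    also have "\<dots> = (\<Prod>i<u. (2 ^ m - 2 ^ (e * i) :: int))"
    proof (rule prod.cong[OF refl])
      fix i assume "i \<in> {..<u}"
      hence "e * i \<le> m" using True mM by simp
      hence "(2::nat) ^ (e * i) \<le> 2 ^ m" by (rule power_increasing) simp
      thus "int (2 ^ m - (2 ^ e) ^ i) = (2 ^ m - 2 ^ (e * i) :: int)"
        by (simp add: power_mult of_nat_diff)
    qed
    finally show ?thesis by (simp add: atLeast0LessThan)
  next
    case False
    hence Mu: "M \<in> {..<u}" by simp
    have h1: "(\<Prod>i<u. 2 ^ m - (2 ^ e) ^ i :: nat) = 0"
      using Mu mM by (auto simp: prod_zero_iff power_mult[symmetric])
    have h2: "(\<Prod>i=0..<u. (2 ^ m - 2 ^ (e * i) :: int)) = 0"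
      using Mu mM by (auto simp: prod_zero_iff atLeast0LessThan)
    show ?thesis unfolding h1 h2 by simp
  qed
  have "int (card (V0 m n d e s u :: 'a list set))
      = int (\<Prod>i<u. 2 ^ m - (2 ^ e) ^ i) * 2 ^ (e * card (fset.Tri u))"
    using cV cIT cF by (simp add: power_mult)
  also have "\<dots> = 2 ^ (e * u * (u + 1) div 2) * (\<Prod>i=0..<u. (2 ^ m - 2 ^ (e * i) :: int))"
    using prodeq ex by (simp add: mult.commute)
  finally show ?thesis .
qed


end
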